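(* Let $X$, $Y_k$ ($k\in\mathbb N$) and norms $\|\cdot\|_{X\oplus Y_k}$ be as in the generalized $\ell^2$-sum setting. Let $P_X:X\to X$ and $P_{Y_k}:Y_k\to Y_k$ ($k\in\mathbb N$) be projections such that the operator $P_X+P_{Y_k}:x+y_k\mapsto P_Xx+P_{Y_k}y_k$ satisfies $\|P_X+P_{Y_k}\|_{X\oplus Y_k}\le1$ for every $k$. (A) The projection $P:x+\sum_k y_k\mapsto P_Xx+\sum_kP_{Y_k}y_k$ on $\Sigma(X\oplus Y_k)$ satisfies $\|P\|_\Sigma\le1$. (B) For every $z\in\Sigma(P_XX\oplus P_{Y_k}Y_k)$ we have $\|z\|_{\Sigma(P_XX\oplus P_{Y_k}Y_k)}=\|z\|_{\Sigma(X\oplus Y_k)}$, where $\Sigma(P_XX\oplus P_{Y_k}Y_k)$ is formed from the spaces $P_XX$, $P_{Y_k}Y_k$ with the restricted norms and the restrictions of $\|\cdot\|_{X\oplus Y_k}$ to $P_XX\oplus P_{Y_k}Y_k$.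
   Context: Setting: $(X,\|\cdot\|_X)$ and $(Y_k,\|\cdot\|_{Y_k})$, $k\in\mathbb N$, are Banach spaces; for each $k$, $\|\cdot\|_{X\oplus Y_k}$ is a norm on $X\oplus Y_k$ coinciding with $\|\cdot\|_X$ on $X$ and with $\|\cdot\|_{Y_k}$ on $Y_k$, and monotone: $\|x+y_k\|_{X\oplus Y_k}\ge\|x\|_X$. Duals of direct sums are identified with direct sums of duals via $(x^*+y^* )(x+y)=x^*(x)+y^*(y)$. $\Lambda(X\oplus Y_k)$ is the set of functionals $x^*+\sum_k\alpha_ky_k^*$ with $x^*\in X^*$, $y_k^*\in Y_k^*$, $\|x^*+y_k^*\|_{X\oplus Y_k}\le1$ for all $k$, $0\le\alpha_k\le1$, $\sum\alpha_k^2\le1$. $\Sigma(X\oplus Y_k)=\{x+y_1+y_2+\dots:x\in X,y_k\in Y_k,\sum\|y_k\|_{Y_k}^2<\infty\}$ with $\|z\|_\Sigma=\|z\|_{\Sigma(X\oplus Y_k)}=\sup\{|z^*(z)|:z^*\in\Lambda(X\oplus Y_k)\}$. *)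

theory Defs
  imports "HOL-Analysis.Analysis"
begin

definition lin_on :: "'v::real_vector set \<Rightarrow> ('v \<Rightarrow> 'w::real_vector) \<Rightarrow> bool" where
  "lin_on S f \<longleftrightarrow> (\<forall>x\<in>S. \<forall>y\<in>S. f (x + y) = f x + f y) \<and>
                  (\<forall>c. \<forall>x\<in>S. f (c *\<^sub>R x) = c *\<^sub>R f x)"

definition bdd_lin_fun :: "'v::real_normed_vector set \<Rightarrow> ('v \<Rightarrow> real) \<Rightarrow> bool" where
  "bdd_lin_fun S f \<longleftrightarrow> lin_on S f \<and> (\<exists>C. \<forall>x\<in>S. \<bar>f x\<bar> \<le> C * norm x)"

definition gen_l2_setting ::
  "'a::banach set \<Rightarrow> (nat \<Rightarrow> 'b::banach set) \<Rightarrow> (nat \<Rightarrow> 'a \<times> 'b \<Rightarrow> real) \<Rightarrow> bool" where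
  "gen_l2_setting X Y N \<longleftrightarrow>
     subspace X \<and> closed X \<and> (\<forall>k. subspace (Y k) \<and> closed (Y k)) \<and>
     (\<forall>k. \<forall>x\<in>X. \<forall>x'\<in>X. \<forall>y\<in>Y k. \<forall>y'\<in>Y k.
           N k (x + x', y + y') \<le> N k (x, y) + N k (x', y')) \<and>
     (\<forall>k. \<forall>c. \<forall>x\<in>X. \<forall>y\<in>Y k. N k (c *\<^sub>R x, c *\<^sub>R y) = \<bar>c\<bar> * N k (x, y)) \<and>
     (\<forall>k. \<forall>x\<in>X. \<forall>y\<in>Y k. N k (x, y) = 0 \<longrightarrow> x = 0 \<and> y = 0) \<and>
     (\<forall>k. \<forall>x\<in>X. N k (x, 0) = norm x) \<and>
     (\<forall>k. \<forall>y\<in>Y k. N k (0, y) = norm y) \<and>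
     (\<forall>k. \<forall>x\<in>X. \<forall>y\<in>Y k. N k (x, y) \<ge> norm x)"

definition Sigma_sp :: "'a::real_normed_vector set \<Rightarrow> (nat \<Rightarrow> 'b::real_normed_vector set)
    \<Rightarrow> ('a \<times> (nat \<Rightarrow> 'b)) set" where
  "Sigma_sp X Y = {(x, y). x \<in> X \<and> (\<forall>k. y k \<in> Y k) \<and> summable (\<lambda>k. (norm (y k))\<^sup>2)}"

text \<open>Lambda(X (+) Y k): data (x*, (y_k*)_k, (alpha_k)_k) representing x* + sum alpha_k y_k*.\<close>
definition Lambda_set :: "'a::real_normed_vector set \<Rightarrow> (nat \<Rightarrow> 'b::real_normed_vector set)
    \<Rightarrow> (nat \<Rightarrow> 'a \<times> 'b \<Rightarrow> real) \<Rightarrow> (('a \<Rightarrow> real) \<times> (nat \<Rightarrow> 'b \<Rightarrow> real) \<times> (nat \<Rightarrow> real)) set" where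
  "Lambda_set X Y N = {(xs, ys, \<alpha>).
      bdd_lin_fun X xs \<and> (\<forall>k. bdd_lin_fun (Y k) (ys k)) \<and>
      (\<forall>k. \<forall>x\<in>X. \<forall>y\<in>Y k. \<bar>xs x + ys k y\<bar> \<le> N k (x, y)) \<and>
      (\<forall>k. 0 \<le> \<alpha> k \<and> \<alpha> k \<le> 1) \<and> summable (\<lambda>k. (\<alpha> k)\<^sup>2) \<and> (\<Sum>k. (\<alpha> k)\<^sup>2) \<le> 1}"

definition lam_apply :: "(('a \<Rightarrow> real) \<times> (nat \<Rightarrow> 'b \<Rightarrow> real) \<times> (nat \<Rightarrow> real))
    \<Rightarrow> ('a \<times> (nat \<Rightarrow> 'b)) \<Rightarrow> real" where
  "lam_apply l z = (case l of (xs, ys, \<alpha>) \<Rightarrow> case z of (x, y) \<Rightarrow>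
      xs x + (\<Sum>k. \<alpha> k * ys k (y k)))"

definition sigma_norm :: "'a::real_normed_vector set \<Rightarrow> (nat \<Rightarrow> 'b::real_normed_vector set)
    \<Rightarrow> (nat \<Rightarrow> 'a \<times> 'b \<Rightarrow> real) \<Rightarrow> ('a \<times> (nat \<Rightarrow> 'b)) \<Rightarrow> real" where
  "sigma_norm X Y N z = (SUP l\<in>Lambda_set X Y N. \<bar>lam_apply l z\<bar>)"

definition sum_proj :: "('a \<Rightarrow> 'a) \<Rightarrow> (nat \<Rightarrow> 'b \<Rightarrow> 'b) \<Rightarrow> ('a \<times> (nat \<Rightarrow> 'b)) \<Rightarrow> ('a \<times> (nat \<Rightarrow> 'b))" where
  "sum_proj PX PY z = (case z of (x, y) \<Rightarrow> (PX x, \<lambda>k. PY k (y k)))"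

end

theory Submission
  imports Defs
begin

lemma lam_apply_simp: "lam_apply (xs,ys,\<alpha>) (x,y) = xs x + (\<Sum>k. \<alpha> k * ys k (y k))"
  by (simp add: lam_apply_def)

lemma lin_on_zero: assumes "lin_on S f" "0 \<in> S" shows "f 0 = 0"
proof -
  have "f (0 *\<^sub>R 0) = 0 *\<^sub>R f 0" using assms unfolding lin_on_def by blast
  thus ?thesis by simp
qed

lemma lam_bound:
  assumes l: "(xs,ys,\<alpha>) \<in> Lambda_set X Y N" and z: "(x,y) \<in> Sigma_sp X Y"
    and X0: "0 \<in> X" and Y0: "\<forall>k. 0 \<in> Y k"
    and NX: "\<forall>k. \<forall>x\<in>X. N k (x,0) = norm x" and NY: "\<forall>k. \<forall>y\<in>Y k. N k (0,y) = norm y"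
  shows "\<bar>lam_apply (xs,ys,\<alpha>) (x,y)\<bar> \<le> norm x + (1 + (\<Sum>k. (norm (y k))\<^sup>2)) / 2"
proof -
  from l have L: "bdd_lin_fun X xs" "\<forall>k. bdd_lin_fun (Y k) (ys k)"
    "\<forall>k. \<forall>x\<in>X. \<forall>y\<in>Y k. \<bar>xs x + ys k y\<bar> \<le> N k (x, y)"
    "\<forall>k. 0 \<le> \<alpha> k \<and> \<alpha> k \<le> 1" "summable (\<lambda>k. (\<alpha> k)\<^sup>2)" "(\<Sum>k. (\<alpha> k)\<^sup>2) \<le> 1"
    unfolding Lambda_set_def by auto
  from z have Z: "x \<in> X" "\<forall>k. y k \<in> Y k" "summable (\<lambda>k. (norm (y k))\<^sup>2)"
    unfolding Sigma_sp_def by auto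
  have xs0: "xs 0 = 0" using L(1) X0 lin_on_zero unfolding bdd_lin_fun_def by blast
  have ys0: "ys k 0 = 0" for k using L(2) Y0 lin_on_zero unfolding bdd_lin_fun_def by blast
  have bx: "\<bar>xs x\<bar> \<le> norm x"
  proof -
    have "\<bar>xs x + ys 0 0\<bar> \<le> N 0 (x, 0)" using L(3) Z(1) Y0 by blast
    thus ?thesis using NX Z(1) ys0[of 0] by simp
  qed
  have by': "\<bar>ys k (y k)\<bar> \<le> norm (y k)" for k
  proof -
    have "\<bar>xs 0 + ys k (y k)\<bar> \<le> N k (0, y k)" using L(3) Z(2) X0 by blast
    thus ?thesis using NY Z(2) xs0 by simp
  qed
  define g where "g = (\<lambda>k. ((\<alpha> k)\<^sup>2 + (norm (y k))\<^sup>2) / 2)"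
  have fg: "\<bar>\<alpha> k * ys k (y k)\<bar> \<le> g k" for k
  proof -
    have "\<bar>\<alpha> k * ys k (y k)\<bar> = \<alpha> k * \<bar>ys k (y k)\<bar>" using L(4) by (simp add: abs_mult)
    also have "\<dots> \<le> \<alpha> k * norm (y k)" using L(4) by' by (simp add: mult_left_mono)
    also have "\<dots> \<le> g k" unfolding g_def
    proof -
      have "0 \<le> (\<alpha> k - norm (y k))\<^sup>2" by simp
      thus "\<alpha> k * norm (y k) \<le> ((\<alpha> k)\<^sup>2 + (norm (y k))\<^sup>2) / 2"
        by (simp add: power2_diff)
    qed
    finally show ?thesis .
  qed
  have sg: "summable g" unfolding g_def using L(5) Z(3)
    by (intro summable_divide summable_add)
  have sa: "summable (\<lambda>k. \<bar>\<alpha> k * ys k (y k)\<bar>)"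
    by (rule summable_comparison_test[OF _ sg]) (use fg in auto)
  have "\<bar>\<Sum>k. \<alpha> k * ys k (y k)\<bar> \<le> (\<Sum>k. \<bar>\<alpha> k * ys k (y k)\<bar>)" by (rule summable_rabs[OF sa])
  also have "\<dots> \<le> suminf g" by (rule suminf_le[OF fg sa sg])
  also have "suminf g = ((\<Sum>k. (\<alpha> k)\<^sup>2) + (\<Sum>k. (norm (y k))\<^sup>2)) / 2"
    unfolding g_def
    using suminf_divide[OF summable_add[OF L(5) Z(3)], of 2] suminf_add[OF L(5) Z(3)] by simp
  also have "\<dots> \<le> (1 + (\<Sum>k. (norm (y k))\<^sup>2)) / 2" using L(6) by simp
  finally show ?thesis using bx unfolding lam_apply_simp by linarith
qed

lemma lam_bdd:
  assumes z: "z \<in> Sigma_sp X Y"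
    and X0: "0 \<in> X" and Y0: "\<forall>k. 0 \<in> Y k"
    and NX: "\<forall>k. \<forall>x\<in>X. N k (x,0) = norm x" and NY: "\<forall>k. \<forall>y\<in>Y k. N k (0,y) = norm y"
  shows "bdd_above ((\<lambda>l. \<bar>lam_apply l z\<bar>) ` Lambda_set X Y N)"
proof -
  obtain x y where zz: "z = (x,y)" by fastforce
  show ?thesis
    unfolding bdd_above_def
    apply (rule exI[of _ "norm x + (1 + (\<Sum>k. (norm (y k))\<^sup>2)) / 2"])
    using lam_bound[OF _ z[unfolded zz] X0 Y0 NX NY] zz by auto
qed

lemma lam_ne:
  assumes "\<forall>k. \<forall>x\<in>X. \<forall>y\<in>Y k. 0 \<le> N k (x,y)"
  shows "Lambda_set X Y N \<noteq> {}"
proof -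
  have "(\<lambda>_. 0, \<lambda>_ _. 0, \<lambda>_. 0) \<in> Lambda_set X Y N"
    using assms unfolding Lambda_set_def bdd_lin_fun_def lin_on_def by (auto intro!: exI[of _ 0])
  thus ?thesis by blast
qed

lemma lin_on_subset: "lin_on S f \<Longrightarrow> T \<subseteq> S \<Longrightarrow> lin_on T f"
  unfolding lin_on_def by blast

lemma pullback:
  assumes setting: "gen_l2_setting (UNIV :: 'a::banach set) Y N"
    and PX_lin: "linear PX"
    and PY_lin: "\<forall>k. lin_on (Y k) (PY k)"
    and PY_maps: "\<forall>k. PY k ` Y k \<subseteq> Y k"
    and contr: "\<forall>k. \<forall>x. \<forall>y\<in>Y k. N k (PX x, PY k y) \<le> N k (x, y)"
    and l: "(xs,ys,\<alpha>) \<in> Lambda_set X' Y' N"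
    and X': "range PX \<subseteq> X'" and Y': "\<forall>k. PY k ` Y k \<subseteq> Y' k"
  shows "(\<lambda>v. xs (PX v), \<lambda>k v. ys k (PY k (v::'b::banach)), \<alpha>) \<in> Lambda_set UNIV Y N"
proof -
  from l have L: "bdd_lin_fun X' xs" "\<forall>k. bdd_lin_fun (Y' k) (ys k)"
    "\<forall>k. \<forall>x\<in>X'. \<forall>y\<in>Y' k. \<bar>xs x + ys k y\<bar> \<le> N k (x, y)"
    "\<forall>k. 0 \<le> \<alpha> k \<and> \<alpha> k \<le> 1" "summable (\<lambda>k. (\<alpha> k)\<^sup>2)" "(\<Sum>k. (\<alpha> k)\<^sup>2) \<le> 1"
    unfolding Lambda_set_def by auto
  have Y0: "0 \<in> Y k" for k using setting unfolding gen_l2_setting_def by (auto intro: subspace_0)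
  have NX: "N k (x,0) = norm x" for k x using setting unfolding gen_l2_setting_def by auto
  have NY: "y \<in> Y k \<Longrightarrow> N k (0,y) = norm y" for k y using setting unfolding gen_l2_setting_def by auto
  have PX0: "PX 0 = 0" using PX_lin linear_0 by blast
  have PY0: "PY k 0 = 0" for k using PY_lin Y0 lin_on_zero by blast
  have key: "\<bar>xs (PX a) + ys k (PY k b)\<bar> \<le> N k (a, b)" if "b \<in> Y k" for a b k
  proof -
    have "PX a \<in> X'" using X' by blast
    moreover have "PY k b \<in> Y' k" using Y' that by blast
    ultimately have "\<bar>xs (PX a) + ys k (PY k b)\<bar> \<le> N k (PX a, PY k b)" using L(3) by blast
    also have "\<dots> \<le> N k (a, b)" using contr that by blast
    finally show ?thesis .
  qed
  have xs0: "xs 0 = 0"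
    using L(1) lin_on_zero X' PX0 unfolding bdd_lin_fun_def by (metis rangeI subsetD)
  have ys0: "ys k 0 = 0" for k
    using L(2) lin_on_zero Y' PY0 Y0 unfolding bdd_lin_fun_def by (metis image_eqI subsetD)
  have linX: "lin_on X' xs" using L(1) unfolding bdd_lin_fun_def by blast
  have linY: "lin_on (Y' k) (ys k)" for k using L(2) unfolding bdd_lin_fun_def by blast
  have b1: "bdd_lin_fun UNIV (\<lambda>v. xs (PX v))"
    unfolding bdd_lin_fun_def
  proof (intro conjI)
    show "lin_on UNIV (\<lambda>v. xs (PX v))"
      unfolding lin_on_def
    proof (intro conjI ballI allI)
      fix a b :: 'a
      have "PX a \<in> X'" "PX b \<in> X'" using X' by auto
      thus "xs (PX (a + b)) = xs (PX a) + xs (PX b)"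
        using linX unfolding lin_on_def by (simp add: linear_add[OF PX_lin])
    next
      fix c and a :: 'a
      have "PX a \<in> X'" using X' by auto
      thus "xs (PX (c *\<^sub>R a)) = c *\<^sub>R xs (PX a)"
        using linX unfolding lin_on_def by (simp add: linear_scale[OF PX_lin])
    qed
    show "\<exists>C. \<forall>x\<in>UNIV. \<bar>xs (PX x)\<bar> \<le> C * norm x"
    proof (intro exI[of _ 1] ballI)
      fix a
      show "\<bar>xs (PX a)\<bar> \<le> 1 * norm a" using key[OF Y0[of 0], of a] PY0 ys0 NX by simp
    qed
  qed
  have b2: "bdd_lin_fun (Y k) (\<lambda>v. ys k (PY k v))" for k
    unfolding bdd_lin_fun_def
  proof (intro conjI)
    show "lin_on (Y k) (\<lambda>v. ys k (PY k v))"
      unfolding lin_on_def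
    proof (intro conjI ballI allI)
      fix a b assume ab: "a \<in> Y k" "b \<in> Y k"
      have "PY k a \<in> Y' k" "PY k b \<in> Y' k" using Y' ab by auto
      moreover have "PY k (a + b) = PY k a + PY k b" using PY_lin ab unfolding lin_on_def by blast
      ultimately show "ys k (PY k (a + b)) = ys k (PY k a) + ys k (PY k b)"
        using linY[of k] unfolding lin_on_def by simp
    next
      fix c a assume a: "a \<in> Y k"
      have "PY k a \<in> Y' k" using Y' a by auto
      moreover have "PY k (c *\<^sub>R a) = c *\<^sub>R PY k a" using PY_lin a unfolding lin_on_def by blast
      ultimately show "ys k (PY k (c *\<^sub>R a)) = c *\<^sub>R ys k (PY k a)"
        using linY[of k] unfolding lin_on_def by simp
    qed
    show "\<exists>C. \<forall>x\<in>Y k. \<bar>ys k (PY k x)\<bar> \<le> C * norm x"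
    proof (intro exI[of _ 1] ballI)
      fix b assume b: "b \<in> Y k"
      show "\<bar>ys k (PY k b)\<bar> \<le> 1 * norm b" using key[OF b, of 0] PX0 xs0 NY[OF b] by simp
    qed
  qed
  show ?thesis unfolding Lambda_set_def using b1 b2 key L(4-6) by auto
qed

theorem lemma2p3:
  fixes PX :: "'a::banach \<Rightarrow> 'a" and PY :: "nat \<Rightarrow> 'b::banach \<Rightarrow> 'b"
    and Y :: "nat \<Rightarrow> 'b set" and N :: "nat \<Rightarrow> 'a \<times> 'b \<Rightarrow> real"
  assumes setting: "gen_l2_setting (UNIV :: 'a set) Y N"
    and PX_lin: "linear PX" and PX_idem: "\<forall>x. PX (PX x) = PX x"
    and PY_lin: "\<forall>k. lin_on (Y k) (PY k)"
    and PY_maps: "\<forall>k. PY k ` Y k \<subseteq> Y k"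
    and PY_idem: "\<forall>k. \<forall>y\<in>Y k. PY k (PY k y) = PY k y"
    and contr: "\<forall>k. \<forall>x. \<forall>y\<in>Y k. N k (PX x, PY k y) \<le> N k (x, y)"
  shows "(\<forall>z\<in>Sigma_sp UNIV Y. sum_proj PX PY z \<in> Sigma_sp UNIV Y \<and>
             sigma_norm UNIV Y N (sum_proj PX PY z) \<le> sigma_norm UNIV Y N z)
       \<and> (\<forall>z\<in>Sigma_sp (range PX) (\<lambda>k. PY k ` Y k).
             sigma_norm (range PX) (\<lambda>k. PY k ` Y k) N z = sigma_norm UNIV Y N z)"
proof -
  have Y0: "0 \<in> Y k" for k using setting unfolding gen_l2_setting_def by (auto intro: subspace_0)
  have NX: "N k (x,0) = norm x" for k x using setting unfolding gen_l2_setting_def by auto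
  have NY: "y \<in> Y k \<Longrightarrow> N k (0,y) = norm y" for k y using setting unfolding gen_l2_setting_def by auto
  have Nmono: "y \<in> Y k \<Longrightarrow> norm x \<le> N k (x,y)" for k x y
    using setting unfolding gen_l2_setting_def by auto
  have Npos: "y \<in> Y k \<Longrightarrow> 0 \<le> N k (x,y)" for k x y using Nmono[of y k x] norm_ge_zero[of x] by linarith
  have PX0: "PX 0 = 0" using PX_lin linear_0 by blast
  have PY0: "PY k 0 = 0" for k using PY_lin Y0 lin_on_zero by blast
  have PYn: "norm (PY k y) \<le> norm y" if "y \<in> Y k" for k y
  proof -
    have "N k (PX 0, PY k y) \<le> N k (0, y)" using contr that by blast
    moreover have "PY k y \<in> Y k" using PY_maps that by blast
    ultimately show ?thesis using NY that PX0 by simp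
  qed
  have neF: "Lambda_set UNIV Y N \<noteq> {}" by (rule lam_ne) (auto intro: Npos)
  have bddF: "bdd_above ((\<lambda>l. \<bar>lam_apply l z\<bar>) ` Lambda_set UNIV Y N)" if "z \<in> Sigma_sp UNIV Y" for z
    by (rule lam_bdd[OF that]) (auto simp: Y0 NX NY)
  have A: "sum_proj PX PY z \<in> Sigma_sp UNIV Y \<and>
             sigma_norm UNIV Y N (sum_proj PX PY z) \<le> sigma_norm UNIV Y N z"
    if z: "z \<in> Sigma_sp UNIV Y" for z
  proof -
    obtain x y where zz: "z = (x,y)" by fastforce
    have yY: "y k \<in> Y k" for k using z zz unfolding Sigma_sp_def by auto
    have sy: "summable (\<lambda>k. (norm (y k))\<^sup>2)" using z zz unfolding Sigma_sp_def by auto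
    have "summable (\<lambda>k. (norm (PY k (y k)))\<^sup>2)"
      apply (rule summable_comparison_test[OF _ sy])
      using PYn[OF yY] by (auto intro!: power_mono)
    moreover have "PY k (y k) \<in> Y k" for k using PY_maps yY by blast
    ultimately have mem: "sum_proj PX PY z \<in> Sigma_sp UNIV Y"
      unfolding zz sum_proj_def Sigma_sp_def by auto
    have "sigma_norm UNIV Y N (sum_proj PX PY z) \<le> sigma_norm UNIV Y N z"
      unfolding sigma_norm_def
    proof (rule cSUP_mono[OF neF bddF[OF z]])
      fix l assume l: "l \<in> Lambda_set UNIV Y N"
      obtain xs ys \<alpha> where ll: "l = (xs,ys,\<alpha>)" by (cases l) auto
      have m: "(\<lambda>v. xs (PX v), \<lambda>k v. ys k (PY k v), \<alpha>) \<in> Lambda_set UNIV Y N"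
        by (rule pullback[OF setting PX_lin PY_lin PY_maps contr l[unfolded ll]]) (auto simp: PY_maps)
      show "\<exists>m\<in>Lambda_set UNIV Y N. \<bar>lam_apply l (sum_proj PX PY z)\<bar> \<le> \<bar>lam_apply m z\<bar>"
        by (rule bexI[OF _ m]) (simp add: ll zz sum_proj_def lam_apply_simp)
    qed
    with mem show ?thesis by blast
  qed
  have B: "sigma_norm (range PX) (\<lambda>k. PY k ` Y k) N z = sigma_norm UNIV Y N z"
    if z: "z \<in> Sigma_sp (range PX) (\<lambda>k. PY k ` Y k)" for z
  proof -
    obtain x y where zz: "z = (x,y)" by fastforce
    have xR: "x \<in> range PX" and yR: "\<And>k. y k \<in> PY k ` Y k"
      and sy: "summable (\<lambda>k. (norm (y k))\<^sup>2)" using z zz unfolding Sigma_sp_def by auto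
    have PXx: "PX x = x" using xR PX_idem by auto
    have PYy: "PY k (y k) = y k" for k using yR[of k] PY_idem by auto
    have yY: "y k \<in> Y k" for k using yR[of k] PY_maps by blast
    have zF: "z \<in> Sigma_sp UNIV Y" using zz yY sy unfolding Sigma_sp_def by auto
    have neR: "Lambda_set (range PX) (\<lambda>k. PY k ` Y k) N \<noteq> {}"
      by (rule lam_ne) (use PY_maps Npos in blast)
    have bddR: "bdd_above ((\<lambda>l. \<bar>lam_apply l z\<bar>) ` Lambda_set (range PX) (\<lambda>k. PY k ` Y k) N)"
    proof (rule lam_bdd[OF z])
      show "0 \<in> range PX" using PX0 by (metis rangeI)
      show "\<forall>k. 0 \<in> PY k ` Y k" using PY0 Y0 by (metis image_eqI)
      show "\<forall>k. \<forall>x\<in>range PX. N k (x, 0) = norm x" using NX by blast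
      show "\<forall>k. \<forall>y\<in>PY k ` Y k. N k (0, y) = norm y" using NY PY_maps by blast
    qed
    have le1: "sigma_norm (range PX) (\<lambda>k. PY k ` Y k) N z \<le> sigma_norm UNIV Y N z"
      unfolding sigma_norm_def
    proof (rule cSUP_mono[OF neR bddF[OF zF]])
      fix l assume l: "l \<in> Lambda_set (range PX) (\<lambda>k. PY k ` Y k) N"
      obtain xs ys \<alpha> where ll: "l = (xs,ys,\<alpha>)" by (cases l) auto
      have m: "(\<lambda>v. xs (PX v), \<lambda>k v. ys k (PY k v), \<alpha>) \<in> Lambda_set UNIV Y N"
        by (rule pullback[OF setting PX_lin PY_lin PY_maps contr l[unfolded ll]]) auto
      show "\<exists>m\<in>Lambda_set UNIV Y N. \<bar>lam_apply l z\<bar> \<le> \<bar>lam_apply m z\<bar>"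
        by (rule bexI[OF _ m]) (simp add: ll zz lam_apply_simp PXx PYy)
    qed
    have le2: "sigma_norm UNIV Y N z \<le> sigma_norm (range PX) (\<lambda>k. PY k ` Y k) N z"
      unfolding sigma_norm_def
    proof (rule cSUP_mono[OF neF bddR])
      fix l assume l: "l \<in> Lambda_set UNIV Y N"
      have "l \<in> Lambda_set (range PX) (\<lambda>k. PY k ` Y k) N"
        using l PY_maps unfolding Lambda_set_def bdd_lin_fun_def
        by (auto intro: lin_on_subset) (meson subsetD subset_UNIV lin_on_subset image_subset_iff)+
      thus "\<exists>m\<in>Lambda_set (range PX) (\<lambda>k. PY k ` Y k) N. \<bar>lam_apply l z\<bar> \<le> \<bar>lam_apply m z\<bar>"
        by blast
    qed
    show ?thesis using le1 le2 by linarith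
  qed
  show ?thesis using A B by blast
qed

end
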